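(* Let $\Delta$ be a pure quasi-forest of dimension $d-1$ with $f$-vector $(f_0,f_1,\ldots,f_{d-1})$. Then $(f_0,\ldots,f_{d-1})$ is unimodal, i.e., there is $j$ with $f_0\le f_1\le\cdots\le f_j\ge f_{j+1}\ge\cdots\ge f_{d-1}$.
   Context: A simplicial complex $\Delta$ on $[n]$ is a collection of subsets of $[n]$ containing all singletons and closed under taking subsets; $\dim\Delta=d-1$ where $d$ is the maximal face size; facets are maximal faces; $\Delta$ is pure if all facets have the same cardinality; $f_i$ is the number of faces with $i+1$ elements. For facets $F_{i_1},\ldots,F_{i_q}$, $\langle F_{i_1},\ldots,F_{i_q}\rangle$ is the subcomplex of all faces contained in some $F_{i_j}$. A facet $F$ is a leaf if there is another facet $G\neq F$ with $H\cap F\subset G\cap F$ for all facets $H\neq F$. A quasi-forest is a simplicial complex whose facets admit an ordering $H_1,\ldots,H_m$ such that for each $1<j\le m$, $H_j$ is a leaf of $\langle H_1,\ldots,H_j\rangle$. *)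

theory Defs
  imports Main
begin

definition simplicial_complex :: "nat \<Rightarrow> nat set set \<Rightarrow> bool" where
  "simplicial_complex n \<Delta> \<longleftrightarrow>
     (\<forall>F\<in>\<Delta>. F \<subseteq> {1..n}) \<and>
     (\<forall>i\<in>{1..n}. {i} \<in> \<Delta>) \<and>
     (\<forall>F\<in>\<Delta>. \<forall>G. G \<subseteq> F \<longrightarrow> G \<in> \<Delta>)"

definition facets :: "nat set set \<Rightarrow> nat set set" where
  "facets \<Delta> = {F \<in> \<Delta>. \<forall>G\<in>\<Delta>. F \<subseteq> G \<longrightarrow> G = F}"

definition pure :: "nat set set \<Rightarrow> bool" where
  "pure \<Delta> \<longleftrightarrow> (\<forall>F\<in>facets \<Delta>. \<forall>G\<in>facets \<Delta>. card F = card G)"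

definition gen :: "nat set set \<Rightarrow> nat set set" where
  "gen FS = {S. \<exists>F\<in>FS. S \<subseteq> F}"

definition is_leaf :: "nat set set \<Rightarrow> nat set \<Rightarrow> bool" where
  "is_leaf \<Delta> F \<longleftrightarrow> F \<in> facets \<Delta> \<and>
     (\<exists>G\<in>facets \<Delta>. G \<noteq> F \<and> (\<forall>H\<in>facets \<Delta>. H \<noteq> F \<longrightarrow> H \<inter> F \<subseteq> G \<inter> F))"

definition quasi_forest :: "nat set set \<Rightarrow> bool" where
  "quasi_forest \<Delta> \<longleftrightarrow> (\<exists>Hs. distinct Hs \<and> set Hs = facets \<Delta> \<and>
     (\<forall>j. 1 \<le> j \<and> j < length Hs \<longrightarrow> is_leaf (gen (set (take (Suc j) Hs))) (Hs ! j)))"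

definition fvec :: "nat set set \<Rightarrow> nat \<Rightarrow> nat" where
  "fvec \<Delta> i = card {F \<in> \<Delta>. card F = i + 1}"

definition unimodal :: "(nat \<Rightarrow> nat) \<Rightarrow> nat \<Rightarrow> bool" where
  "unimodal f d \<longleftrightarrow> (\<exists>j. (\<forall>i. i + 1 \<le> j \<and> i + 1 < d \<longrightarrow> f i \<le> f (i + 1)) \<and>
                          (\<forall>i. j \<le> i \<and> i + 1 < d \<longrightarrow> f (i + 1) \<le> f i))"

end

theory Submission
  imports Defs Complex_Main
begin

lemma binom_E: "Suc u * (s choose Suc u) = (s - u) * (s choose u)"
proof (cases s)
  case 0 then show ?thesis by simp
next
  case (Suc s')
  have "Suc u * (Suc s' choose Suc u) = Suc s' * (s' choose u)"
    by (rule Suc_times_binomial)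
  moreover have "(Suc s' - u) * (Suc s' choose u) = Suc s' * ((Suc s' - 1) choose u)"
    by (rule binomial_absorb_comp)
  ultimately show ?thesis using Suc by simp
qed

lemma binom_L1: assumes "2*t+1 \<le> s" shows "(s choose t) \<le> (s choose Suc t)"
proof -
  have "Suc t * (s choose t) \<le> (s - t) * (s choose t)"
    using assms by (intro mult_right_mono) auto
  also have "\<dots> = Suc t * (s choose Suc t)" using binom_E by simp
  finally show ?thesis by (simp only: Suc_mult_le_cancel1)
qed

lemma binom_L2: assumes "s \<le> 2*u+1" shows "(s choose Suc u) \<le> (s choose u)"
proof -
  have "Suc u * (s choose Suc u) = (s - u) * (s choose u)" by (rule binom_E)
  also have "\<dots> \<le> Suc u * (s choose u)"
    using assms by (intro mult_right_mono) auto
  finally show ?thesis by (simp only: Suc_mult_le_cancel1)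
qed

lemma D_mono:
  assumes "k \<le> s" "2*t+1 \<le> k" "1 \<le> t"
  shows "int (k choose Suc t) - int (k choose t) \<le> int (s choose Suc t) - int (s choose t)"
  using assms(1)
proof (induction s rule: dec_induct)
  case base then show ?case by simp
next
  case (step m)
  obtain u where t: "t = Suc u" using assms(3) by (cases t) auto
  have "(m choose u) \<le> (m choose t)" unfolding t
    using binom_L1[of u m] assms step.hyps t by simp
  then show ?case using step.IH unfolding t by simp
qed

lemma g_inc:
  assumes "k \<le> d" "1 \<le> t" "2*t < d"
  shows "(d choose t) - (k choose t) \<le> (d choose Suc t) - (k choose Suc t)"
proof -
  have a: "(k choose t) \<le> (d choose t)" "(k choose Suc t) \<le> (d choose Suc t)"
    using assms(1) binomial_right_mono by auto
  have b: "(d choose t) \<le> (d choose Suc t)" using binom_L1 assms by simp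
  have "int (k choose Suc t) - int (k choose t) \<le> int (d choose Suc t) - int (d choose t)"
  proof (cases "2*t+1 \<le> k")
    case True then show ?thesis using D_mono assms by simp
  next
    case False
    then have "(k choose Suc t) \<le> (k choose t)" using binom_L2[of k t] by simp
    then show ?thesis using b by simp
  qed
  then show ?thesis using a by linarith
qed

lemma g_dec_aux:
  assumes "k \<le> s" "s \<le> 2*t"
  shows "(s choose Suc t) + (k choose t) \<le> (s choose t) + (k choose Suc t)"
  using assms
proof (induction s rule: dec_induct)
  case base then show ?case by simp
next
  case (step m)
  obtain u where t: "t = Suc u" using step.prems by (cases t) auto
  have "(m choose t) \<le> (m choose u)" unfolding t
    using binom_L2[of m u] step.prems t by simp
  then show ?case using step.IH step.prems unfolding t by simp
qed

lemma g_dec: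
  assumes "k \<le> d" "d \<le> 2*t"
  shows "(d choose Suc t) - (k choose Suc t) \<le> (d choose t) - (k choose t)"
proof -
  have a: "(k choose t) \<le> (d choose t)" "(k choose Suc t) \<le> (d choose Suc t)"
    using assms(1) binomial_right_mono by auto
  show ?thesis using g_dec_aux[OF assms] a by linarith
qed

definition incp :: "(nat \<Rightarrow> nat) \<Rightarrow> nat \<Rightarrow> bool" where
  "incp h d \<longleftrightarrow> (\<forall>t. 1 \<le> t \<and> 2*t < d \<longrightarrow> h t \<le> h (Suc t))"

definition decp :: "(nat \<Rightarrow> nat) \<Rightarrow> nat \<Rightarrow> bool" where
  "decp h d \<longleftrightarrow> (\<forall>t. 1 \<le> t \<and> d \<le> 2*t \<longrightarrow> h (Suc t) \<le> h t)"

lemma facets_gen: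
  assumes "\<forall>A\<in>X. finite A \<and> card A = d"
  shows "facets (gen X) = X"
proof
  show "facets (gen X) \<subseteq> X"
  proof
    fix F assume F: "F \<in> facets (gen X)"
    then obtain A where A: "A \<in> X" "F \<subseteq> A" unfolding facets_def gen_def by auto
    have "A \<in> gen X" using A unfolding gen_def by auto
    then have "A = F" using F A unfolding facets_def by auto
    then show "F \<in> X" using A by simp
  qed
next
  show "X \<subseteq> facets (gen X)"
  proof
    fix A assume A: "A \<in> X"
    have "G = A" if G: "G \<in> gen X" "A \<subseteq> G" for G
    proof -
      obtain B where B: "B \<in> X" "G \<subseteq> B" using G(1) unfolding gen_def by blast
      have "A = B" using card_subset_eq[of B A] assms A B that by auto
      then show ?thesis using B that by auto
    qed
    then show "A \<in> facets (gen X)" using A unfolding facets_def gen_def by auto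
  qed
qed

lemma count_new:
  assumes "finite H" "K \<subseteq> H"
  shows "card {S. S \<subseteq> H \<and> card S = t \<and> \<not> S \<subseteq> K} = (card H choose t) - (card K choose t)"
proof -
  have fK: "finite K" using assms finite_subset by auto
  have eq: "{S. S \<subseteq> H \<and> card S = t \<and> \<not> S \<subseteq> K} = {S. S \<subseteq> H \<and> card S = t} - {S. S \<subseteq> K \<and> card S = t}"
    by auto
  have sub: "{S. S \<subseteq> K \<and> card S = t} \<subseteq> {S. S \<subseteq> H \<and> card S = t}" using assms by auto
  have fin: "finite {S. S \<subseteq> K \<and> card S = t}" using fK by auto
  show ?thesis unfolding eq card_Diff_subset[OF fin sub] n_subsets[OF assms(1)] n_subsets[OF fK] ..
qed

lemma gen_insert: "gen (insert H X) = {S. S \<subseteq> H} \<union> gen X"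
  unfolding gen_def by auto

lemma finite_gen: "finite X \<Longrightarrow> \<forall>A\<in>X. finite A \<Longrightarrow> finite (gen X)"
proof -
  assume a: "finite X" "\<forall>A\<in>X. finite A"
  have "gen X \<subseteq> Pow (\<Union>X)" unfolding gen_def by auto
  moreover have "finite (Pow (\<Union>X))" using a by auto
  ultimately show ?thesis using finite_subset by auto
qed

lemma step_count:
  assumes fX: "finite X" "\<forall>A\<in>X. finite A" and fH: "finite H" and KH: "K \<subseteq> H"
    and cond: "\<forall>S. S \<subseteq> H \<and> S \<noteq> {} \<longrightarrow> (S \<in> gen X \<longleftrightarrow> S \<subseteq> K)"
    and t: "1 \<le> t"
  shows "card {S \<in> gen (insert H X). card S = t} = card {S \<in> gen X. card S = t} + ((card H choose t) - (card K choose t))"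
proof -
  have eq: "{S \<in> gen (insert H X). card S = t} = {S \<in> gen X. card S = t} \<union> {S. S \<subseteq> H \<and> card S = t \<and> \<not> S \<subseteq> K}"
  proof -
    have "S \<in> gen X" if "S \<subseteq> H" "card S = t" "S \<subseteq> K" for S
      using that cond t by (metis card.empty not_one_le_zero)
    then show ?thesis unfolding gen_insert by auto
  qed
  have disj: "{S \<in> gen X. card S = t} \<inter> {S. S \<subseteq> H \<and> card S = t \<and> \<not> S \<subseteq> K} = {}"
  proof (rule ccontr)
    assume "\<not> ?thesis"
    then obtain S where S: "S \<in> gen X" "card S = t" "S \<subseteq> H" "\<not> S \<subseteq> K" by blast
    have "S \<noteq> {}" using S t by auto
    then show False using cond S by blast
  qed
  have f1: "finite {S \<in> gen X. card S = t}" using finite_gen[OF fX] by auto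
  have f2: "finite {S. S \<subseteq> H \<and> card S = t \<and> \<not> S \<subseteq> K}" using fH by auto
  show ?thesis unfolding eq card_Un_disjoint[OF f1 f2 disj] count_new[OF fH KH] ..
qed

theorem theorem3p2:
  fixes n d :: nat and \<Delta> :: "nat set set"
  assumes "simplicial_complex n \<Delta>"
    and "pure \<Delta>"
    and "quasi_forest \<Delta>"
    and "\<exists>F\<in>\<Delta>. card F = d"
    and "\<forall>F\<in>\<Delta>. card F \<le> d"
  shows "unimodal (fvec \<Delta>) d"
proof -
  obtain Hs where Hs: "distinct Hs" "set Hs = facets \<Delta>"
    "\<And>j. 1 \<le> j \<Longrightarrow> j < length Hs \<Longrightarrow> is_leaf (gen (set (take (Suc j) Hs))) (Hs ! j)"
    using assms(3) unfolding quasi_forest_def by blast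
  have sc: "\<forall>F\<in>\<Delta>. F \<subseteq> {1..n}" "\<forall>F\<in>\<Delta>. \<forall>G. G \<subseteq> F \<longrightarrow> G \<in> \<Delta>"
    using assms(1) unfolding simplicial_complex_def by auto
  have finD: "finite \<Delta>" using sc(1) finite_subset[of \<Delta> "Pow {1..n}"] by auto
  have finF: "\<forall>F\<in>\<Delta>. finite F" using sc(1) finite_subset by blast
  have maxl: "\<exists>M\<in>facets \<Delta>. F \<subseteq> M" if "F \<in> \<Delta>" for F
    using finite_has_maximal2[OF finD that] unfolding facets_def by auto
  have fac_sub: "facets \<Delta> \<subseteq> \<Delta>" unfolding facets_def by auto
  obtain F0 where F0: "F0 \<in> \<Delta>" "card F0 = d" using assms(4) by auto
  obtain M0 where M0: "M0 \<in> facets \<Delta>" "F0 \<subseteq> M0" using maxl[OF F0(1)] by auto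
  have M0D: "M0 \<in> \<Delta>" using M0 fac_sub by auto
  have "card F0 \<le> card M0" using M0D finF M0(2) card_mono by blast
  moreover have "card M0 \<le> d" using M0D assms(5) by blast
  ultimately have "card M0 = d" using F0 by linarith
  moreover have "\<forall>M\<in>facets \<Delta>. card M = card M0" using assms(2) M0(1) unfolding pure_def by blast
  moreover have "\<forall>M\<in>facets \<Delta>. finite M" using fac_sub finF by blast
  ultimately have cardfac: "\<forall>M\<in>facets \<Delta>. finite M \<and> card M = d" by simp
  have Deq: "gen (facets \<Delta>) = \<Delta>"
  proof
    show "gen (facets \<Delta>) \<subseteq> \<Delta>" using fac_sub sc(2) unfolding gen_def by auto
    show "\<Delta> \<subseteq> gen (facets \<Delta>)" using maxl unfolding gen_def by auto
  qed
  define c where "c j t = card {S \<in> gen (set (take j Hs)). card S = t}" for j t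
  have setH: "\<forall>A\<in>set (take j Hs). finite A \<and> card A = d" for j
    using cardfac Hs(2) by (blast dest: in_set_takeD)
  have step: "\<exists>k\<le>d. \<forall>t\<ge>1. c (Suc j) t = c j t + ((d choose t) - (k choose t))" if j: "j < length Hs" for j
  proof -
    define H where "H = Hs ! j"
    have tk: "set (take (Suc j) Hs) = insert H (set (take j Hs))"
      using j unfolding H_def by (simp add: take_Suc_conv_app_nth)
    have Hfac: "H \<in> facets \<Delta>" using j Hs(2) unfolding H_def by auto
    have notin: "H \<notin> set (take j Hs)"
    proof
      assume "H \<in> set (take j Hs)"
      then obtain i where "i < length (take j Hs)" "take j Hs ! i = H" by (auto simp: in_set_conv_nth)
      then have "i < j" "Hs ! i = Hs ! j" using H_def by auto
      then show False using Hs(1) j nth_eq_iff_index_eq by fastforce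
    qed
    obtain K where K: "K \<subseteq> H" "\<forall>S. S \<subseteq> H \<and> S \<noteq> {} \<longrightarrow> (S \<in> gen (set (take j Hs)) \<longleftrightarrow> S \<subseteq> K)"
    proof (cases "j = 0")
      case True
      show ?thesis by (rule that[of "{}"]) (auto simp: True gen_def)
    next
      case False
      have leaf: "is_leaf (gen (set (take (Suc j) Hs))) H"
        using Hs(3)[of j] False j unfolding H_def by auto
      have ff: "facets (gen (set (take (Suc j) Hs))) = set (take (Suc j) Hs)"
        using facets_gen setH by blast
      obtain G where G: "G \<in> set (take (Suc j) Hs)" "G \<noteq> H"
        "\<forall>H'\<in>set (take (Suc j) Hs). H' \<noteq> H \<longrightarrow> H' \<inter> H \<subseteq> G \<inter> H"
        using leaf unfolding is_leaf_def ff by blast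
      have G': "G \<in> set (take j Hs)" using G tk by auto
      show ?thesis
      proof (rule that[of "H \<inter> G"])
        show "H \<inter> G \<subseteq> H" by auto
        show "\<forall>S. S \<subseteq> H \<and> S \<noteq> {} \<longrightarrow> (S \<in> gen (set (take j Hs)) \<longleftrightarrow> S \<subseteq> H \<inter> G)"
        proof (intro allI impI)
          fix S assume S: "S \<subseteq> H \<and> S \<noteq> {}"
          show "(S \<in> gen (set (take j Hs)) \<longleftrightarrow> S \<subseteq> H \<inter> G)"
          proof
            assume "S \<in> gen (set (take j Hs))"
            then obtain H' where H': "H' \<in> set (take j Hs)" "S \<subseteq> H'" unfolding gen_def by auto
            have "H' \<noteq> H" using H' notin by auto
            then have "H' \<inter> H \<subseteq> G \<inter> H" using G(3) H' tk by auto
            then show "S \<subseteq> H \<inter> G" using S H' by auto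
          next
            assume "S \<subseteq> H \<inter> G"
            then show "S \<in> gen (set (take j Hs))" using G' unfolding gen_def by auto
          qed
        qed
      qed
    qed
    have fH: "finite H" "card H = d" using cardfac Hfac by auto
    have cK: "card K \<le> d" using K(1) fH card_mono by metis
    have "\<forall>t\<ge>1. c (Suc j) t = c j t + ((d choose t) - (card K choose t))"
    proof (intro allI impI)
      fix t :: nat assume t: "1 \<le> t"
      show "c (Suc j) t = c j t + ((d choose t) - (card K choose t))"
        unfolding c_def tk
        using step_count[of "set (take j Hs)" H K t] setH fH K t by auto
    qed
    then show ?thesis using cK by blast
  qed
  have ind: "incp (c j) d \<and> decp (c j) d" if "j \<le> length Hs" for j
    using that
  proof (induction j)
    case 0
    then show ?case unfolding c_def incp_def decp_def gen_def by simp
  next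
    case (Suc j)
    then obtain k where k: "k \<le> d" "\<forall>t\<ge>1. c (Suc j) t = c j t + ((d choose t) - (k choose t))"
      using step[of j] by auto
    have IH: "incp (c j) d" "decp (c j) d" using Suc by auto
    have "incp (c (Suc j)) d"
      unfolding incp_def
    proof (intro allI impI)
      fix t assume t: "1 \<le> t \<and> 2 * t < d"
      have "c j t \<le> c j (Suc t)" using IH t unfolding incp_def by auto
      moreover have "(d choose t) - (k choose t) \<le> (d choose Suc t) - (k choose Suc t)"
        using g_inc k t by auto
      ultimately show "c (Suc j) t \<le> c (Suc j) (Suc t)" using k t by simp
    qed
    moreover have "decp (c (Suc j)) d"
      unfolding decp_def
    proof (intro allI impI)
      fix t assume t: "1 \<le> t \<and> d \<le> 2 * t"
      have "c j (Suc t) \<le> c j t" using IH t unfolding decp_def by auto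
      moreover have "(d choose Suc t) - (k choose Suc t) \<le> (d choose t) - (k choose t)"
        using g_dec k t by auto
      ultimately show "c (Suc j) (Suc t) \<le> c (Suc j) t" using k t by simp
    qed
    ultimately show ?case by simp
  qed
  have fv: "fvec \<Delta> i = c (length Hs) (Suc i)" for i
    unfolding fvec_def c_def using Hs(2) Deq by simp
  have final: "incp (c (length Hs)) d" "decp (c (length Hs)) d" using ind by auto
  show ?thesis
    unfolding unimodal_def
  proof (intro exI[of _ "(d - 1) div 2"] conjI allI impI)
    fix i assume i: "i + 1 \<le> (d - 1) div 2 \<and> i + 1 < d"
    then have "1 \<le> Suc i \<and> 2 * Suc i < d" by presburger
    then show "fvec \<Delta> i \<le> fvec \<Delta> (i + 1)" using final(1) unfolding incp_def fv by simp
  next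
    fix i assume i: "(d - 1) div 2 \<le> i \<and> i + 1 < d"
    then have "1 \<le> Suc i \<and> d \<le> 2 * Suc i" by presburger
    then show "fvec \<Delta> (i + 1) \<le> fvec \<Delta> i" using final(2) unfolding decp_def fv by simp
  qed
qed

end
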